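(* Let $A,B$ be idempotent $\Gamma$-graded rings and ${}_AP_B$, ${}_BQ_A$ graded bimodules unital on both sides, such that there is a graded Morita context $(A,B,P,Q,\mu,\nu)$ with surjective trace maps. For every unital graded left $A$-module $U$, there is an isomorphism of graded left $B$-modules $B\cdot\mathrm{HOM}_A(P,U)\cong B\cdot\mathrm{HOM}_A(P,U/t_A(U))$.
   Context: $\Gamma$ is a fixed multiplicative group with identity $e$. Rings are associative $\Gamma$-graded, not necessarily unital; $A$ is idempotent if $A^2=A$; a module is unital if $AM=M$; $t_A(U)=\{u\in U: Au=0\}$. A left-linear $f$ is graded of degree $\sigma$ if $f(M_\tau)\subseteq N_{\tau\sigma}$; $\mathrm{HOM}$ is the direct sum over degrees; $\mathrm{HOM}_A(P,N)$ is a graded left $B$-module via $(bf)(p)=f(pb)$; $B\cdot H$ denotes finite sums $\sum b_ih_i$. A graded Morita context $(A,B,P,Q,\mu,\nu)$: idempotent graded rings $A,B$, graded bimodules ${}_AP_B$, ${}_BQ_A$ unital on both sides, degree-$e$ graded bimodule maps $\mu:P\otimes_BQ\to A$, $\langle p,q\rangle=\mu(p\otimes q)$, $\nu:Q\otimes_AP\to B$, $[q,p]=\nu(q\otimes p)$, with $p'[q,p]=\langle p',q\rangle p$ and $q'\langle p,q\rangle=[q',p]q$. *)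

theory Defs
  imports Main "HOL-Library.Function_Algebras"
begin

text \<open>The grading group Gamma is a type 'g of class group_add
(not necessarily commutative); its multiplication is written +, its identity e is 0.
Rings are types of class ring (associative, not necessarily unital).\<close>

definition fin_sums :: "'m::comm_monoid_add set \<Rightarrow> 'm set" where
  "fin_sums S = {x. \<exists>(n::nat) f. (\<forall>i<n. f i \<in> S) \<and> x = (\<Sum>i<n. f i)}"

definition graded_group :: "('g \<Rightarrow> 'm::ab_group_add set) \<Rightarrow> bool" where
  "graded_group G \<longleftrightarrow>
     (\<forall>g. 0 \<in> G g \<and> (\<forall>x\<in>G g. \<forall>y\<in>G g. x + y \<in> G g) \<and> (\<forall>x\<in>G g. - x \<in> G g)) \<and>
     (\<forall>m. \<exists>!c. finite {g. c g \<noteq> 0} \<and> (\<forall>g. c g \<in> G g) \<and> m = (\<Sum>g\<in>{g. c g \<noteq> 0}. c g))"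

definition graded_ring :: "('g::group_add \<Rightarrow> 'a::ring set) \<Rightarrow> bool" where
  "graded_ring G \<longleftrightarrow> graded_group G \<and>
     (\<forall>s t. \<forall>x\<in>G s. \<forall>y\<in>G t. x * y \<in> G (s + t))"

definition idempotent_ring :: "'a::ring itself \<Rightarrow> bool" where
  "idempotent_ring _ \<longleftrightarrow> fin_sums {x * y | x y :: 'a. True} = UNIV"

definition lmod :: "('a::ring \<Rightarrow> 'm::ab_group_add \<Rightarrow> 'm) \<Rightarrow> bool" where
  "lmod sm \<longleftrightarrow> (\<forall>a x y. sm a (x + y) = sm a x + sm a y) \<and>
     (\<forall>a b x. sm (a + b) x = sm a x + sm b x) \<and> (\<forall>a b x. sm (a * b) x = sm a (sm b x))"

definition rmod :: "('m::ab_group_add \<Rightarrow> 'b::ring \<Rightarrow> 'm) \<Rightarrow> bool" where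
  "rmod sm \<longleftrightarrow> (\<forall>b x y. sm (x + y) b = sm x b + sm y b) \<and>
     (\<forall>a b x. sm x (a + b) = sm x a + sm x b) \<and> (\<forall>a b x. sm x (a * b) = sm (sm x a) b)"

definition graded_lmod :: "('g::group_add \<Rightarrow> 'a::ring set) \<Rightarrow> ('g \<Rightarrow> 'm::ab_group_add set)
    \<Rightarrow> ('a \<Rightarrow> 'm \<Rightarrow> 'm) \<Rightarrow> bool" where
  "graded_lmod GA GM sm \<longleftrightarrow> lmod sm \<and> graded_group GM \<and>
     (\<forall>s t. \<forall>a\<in>GA s. \<forall>m\<in>GM t. sm a m \<in> GM (s + t))"

definition graded_rmod :: "('g::group_add \<Rightarrow> 'b::ring set) \<Rightarrow> ('g \<Rightarrow> 'm::ab_group_add set)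
    \<Rightarrow> ('m \<Rightarrow> 'b \<Rightarrow> 'm) \<Rightarrow> bool" where
  "graded_rmod GB GM sm \<longleftrightarrow> rmod sm \<and> graded_group GM \<and>
     (\<forall>s t. \<forall>m\<in>GM t. \<forall>b\<in>GB s. sm m b \<in> GM (t + s))"

definition unital_lmod :: "('a::ring \<Rightarrow> 'm::ab_group_add \<Rightarrow> 'm) \<Rightarrow> bool" where
  "unital_lmod sm \<longleftrightarrow> fin_sums {sm a m | a m. True} = UNIV"

definition unital_rmod :: "('m::ab_group_add \<Rightarrow> 'b::ring \<Rightarrow> 'm) \<Rightarrow> bool" where
  "unital_rmod sm \<longleftrightarrow> fin_sums {sm m b | m b. True} = UNIV"

definition unital_graded_bimod :: "('g::group_add \<Rightarrow> 'a::ring set) \<Rightarrow> ('g \<Rightarrow> 'b::ring set)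
    \<Rightarrow> ('g \<Rightarrow> 'm::ab_group_add set) \<Rightarrow> ('a \<Rightarrow> 'm \<Rightarrow> 'm) \<Rightarrow> ('m \<Rightarrow> 'b \<Rightarrow> 'm) \<Rightarrow> bool" where
  "unital_graded_bimod GA GB GM sl sr \<longleftrightarrow> graded_lmod GA GM sl \<and> graded_rmod GB GM sr \<and>
     (\<forall>a m b. sr (sl a m) b = sl a (sr m b)) \<and> unital_lmod sl \<and> unital_rmod sr"

text \<open>The bimodule maps
mu : P \<otimes>_B Q \<rightarrow> A and nu : Q \<otimes>_A P \<rightarrow> B of degree e are given, via the universal
property of the tensor product, as balanced biadditive pairings
mu p q = <p,q> and nu q p = [q,p].\<close>
definition graded_morita_context ::
  "('g::group_add \<Rightarrow> 'a::ring set) \<Rightarrow> ('g \<Rightarrow> 'b::ring set)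
   \<Rightarrow> ('g \<Rightarrow> 'p::ab_group_add set) \<Rightarrow> ('g \<Rightarrow> 'q::ab_group_add set)
   \<Rightarrow> ('a \<Rightarrow> 'p \<Rightarrow> 'p) \<Rightarrow> ('p \<Rightarrow> 'b \<Rightarrow> 'p) \<Rightarrow> ('b \<Rightarrow> 'q \<Rightarrow> 'q) \<Rightarrow> ('q \<Rightarrow> 'a \<Rightarrow> 'q)
   \<Rightarrow> ('p \<Rightarrow> 'q \<Rightarrow> 'a) \<Rightarrow> ('q \<Rightarrow> 'p \<Rightarrow> 'b) \<Rightarrow> bool" where
  "graded_morita_context GA GB GP GQ laP raP lbQ raQ mu nu \<longleftrightarrow>
     graded_ring GA \<and> graded_ring GB \<and> idempotent_ring TYPE('a) \<and> idempotent_ring TYPE('b) \<and>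
     unital_graded_bimod GA GB GP laP raP \<and> unital_graded_bimod GB GA GQ lbQ raQ \<and>
     (\<forall>p p' q. mu (p + p') q = mu p q + mu p' q) \<and> (\<forall>p q q'. mu p (q + q') = mu p q + mu p q') \<and>
     (\<forall>p b q. mu (raP p b) q = mu p (lbQ b q)) \<and>
     (\<forall>a p q. mu (laP a p) q = a * mu p q) \<and> (\<forall>p q a. mu p (raQ q a) = mu p q * a) \<and>
     (\<forall>s t. \<forall>p\<in>GP s. \<forall>q\<in>GQ t. mu p q \<in> GA (s + t)) \<and>
     (\<forall>q q' p. nu (q + q') p = nu q p + nu q' p) \<and> (\<forall>q p p'. nu q (p + p') = nu q p + nu q p') \<and>
     (\<forall>q a p. nu (raQ q a) p = nu q (laP a p)) \<and>
     (\<forall>b q p. nu (lbQ b q) p = b * nu q p) \<and> (\<forall>q p b. nu q (raP p b) = nu q p * b) \<and>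
     (\<forall>s t. \<forall>q\<in>GQ s. \<forall>p\<in>GP t. nu q p \<in> GB (s + t)) \<and>
     (\<forall>p' q p. raP p' (nu q p) = laP (mu p' q) p) \<and>
     (\<forall>q' p q. raQ q' (mu p q) = lbQ (nu q' p) q)"

definition torsion :: "('a \<Rightarrow> 'm::zero \<Rightarrow> 'm) \<Rightarrow> 'm set" where
  "torsion sm = {u. \<forall>a. sm a u = 0}"

definition graded_hom_deg :: "('g::group_add \<Rightarrow> 'm::ab_group_add set) \<Rightarrow> ('g \<Rightarrow> 'n::ab_group_add set)
    \<Rightarrow> ('a \<Rightarrow> 'm \<Rightarrow> 'm) \<Rightarrow> ('a \<Rightarrow> 'n \<Rightarrow> 'n) \<Rightarrow> 'g \<Rightarrow> ('m \<Rightarrow> 'n) \<Rightarrow> bool" where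
  "graded_hom_deg GM GN sM sN s f \<longleftrightarrow> (\<forall>x y. f (x + y) = f x + f y) \<and>
     (\<forall>a x. f (sM a x) = sN a (f x)) \<and> (\<forall>t. \<forall>x\<in>GM t. f x \<in> GN (t + s))"

definition HOMs :: "('g::group_add \<Rightarrow> 'm::ab_group_add set) \<Rightarrow> ('g \<Rightarrow> 'n::ab_group_add set)
    \<Rightarrow> ('a \<Rightarrow> 'm \<Rightarrow> 'm) \<Rightarrow> ('a \<Rightarrow> 'n \<Rightarrow> 'n) \<Rightarrow> 'g \<Rightarrow> ('m \<Rightarrow> 'n) set" where
  "HOMs GM GN sM sN s = {f. graded_hom_deg GM GN sM sN s f}"

definition HOM :: "('g::group_add \<Rightarrow> 'm::ab_group_add set) \<Rightarrow> ('g \<Rightarrow> 'n::ab_group_add set)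
    \<Rightarrow> ('a \<Rightarrow> 'm \<Rightarrow> 'm) \<Rightarrow> ('a \<Rightarrow> 'n \<Rightarrow> 'n) \<Rightarrow> ('m \<Rightarrow> 'n) set" where
  "HOM GM GN sM sN = fin_sums (\<Union>s. HOMs GM GN sM sN s)"

definition hom_bact :: "('p \<Rightarrow> 'b \<Rightarrow> 'p) \<Rightarrow> 'b \<Rightarrow> ('p \<Rightarrow> 'n) \<Rightarrow> ('p \<Rightarrow> 'n)" where
  "hom_bact raP b f = (\<lambda>p. f (raP p b))"

definition B_dot :: "('p \<Rightarrow> 'b \<Rightarrow> 'p) \<Rightarrow> ('p \<Rightarrow> 'n::ab_group_add) set \<Rightarrow> ('p \<Rightarrow> 'n) set" where
  "B_dot raP H = fin_sums {hom_bact raP b h | b h. h \<in> H}"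

definition graded_B_iso :: "('g::group_add \<Rightarrow> 'p::ab_group_add set) \<Rightarrow> ('a \<Rightarrow> 'p \<Rightarrow> 'p) \<Rightarrow> ('p \<Rightarrow> 'b \<Rightarrow> 'p)
    \<Rightarrow> ('g \<Rightarrow> 'n1::ab_group_add set) \<Rightarrow> ('a \<Rightarrow> 'n1 \<Rightarrow> 'n1)
    \<Rightarrow> ('g \<Rightarrow> 'n2::ab_group_add set) \<Rightarrow> ('a \<Rightarrow> 'n2 \<Rightarrow> 'n2)
    \<Rightarrow> (('p \<Rightarrow> 'n1) \<Rightarrow> ('p \<Rightarrow> 'n2)) \<Rightarrow> bool" where
  "graded_B_iso GP laP raP G1 s1 G2 s2 \<phi> \<longleftrightarrow>
     (let D1 = B_dot raP (HOM GP G1 laP s1); D2 = B_dot raP (HOM GP G2 laP s2) in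
       bij_betw \<phi> D1 D2 \<and>
       (\<forall>f\<in>D1. \<forall>g\<in>D1. \<phi> (f + g) = \<phi> f + \<phi> g) \<and>
       (\<forall>b. \<forall>f\<in>D1. \<phi> (hom_bact raP b f) = hom_bact raP b (\<phi> f)) \<and>
       (\<forall>s. \<forall>f\<in>D1. f \<in> HOMs GP G1 laP s1 s \<longleftrightarrow> \<phi> f \<in> HOMs GP G2 laP s2 s))"

end

theory Submission
  imports Defs
begin

definition addf :: "('x::monoid_add \<Rightarrow> 'y::ab_group_add) \<Rightarrow> bool" where
  "addf f \<longleftrightarrow> (\<forall>x y. f (x + y) = f x + f y)"

lemma addf_0: "addf f \<Longrightarrow> f 0 = 0"
  unfolding addf_def by (metis add.right_neutral add_left_imp_eq add_0)

lemma addf_sum: assumes "addf f" shows "f (sum g I) = (\<Sum>i\<in>I. f (g i))"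
proof (cases "finite I")
  case True thus ?thesis
    by (induction I rule: finite_induct) (use assms in \<open>auto simp: addf_0 addf_def\<close>)
next
  case False thus ?thesis using addf_0[OF assms] by simp
qed

lemma addf_diff: fixes f :: "'x::ab_group_add \<Rightarrow> 'y::ab_group_add"
  assumes "addf f" shows "f (x - y) = f x - f y"
proof -
  have "f (x - y) + f y = f x" using assms unfolding addf_def by (metis diff_add_cancel)
  thus ?thesis by (metis add_diff_cancel)
qed

lemma fs_0: "0 \<in> fin_sums S"
  unfolding fin_sums_def by (rule CollectI, rule exI[of _ 0]) simp

lemma fs_base: "x \<in> S \<Longrightarrow> x \<in> fin_sums S"
  unfolding fin_sums_def by (rule CollectI, rule exI[of _ 1], rule exI[of _ "\<lambda>_. x"]) simp

lemma fs_snoc: assumes "z \<in> fin_sums S" "s \<in> S" shows "z + s \<in> fin_sums S"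
proof -
  obtain n f where nf: "\<forall>i<(n::nat). f i \<in> S" "z = (\<Sum>i<n. f i)" using assms(1) unfolding fin_sums_def mem_Collect_eq by blast
  let ?f = "f(n := s)"
  have e: "(\<Sum>i<Suc n. ?f i) = z + s" using nf(2) by simp
  have m: "\<forall>i<Suc n. ?f i \<in> S" using nf(1) assms(2) by (auto simp: less_Suc_eq)
  show ?thesis unfolding fin_sums_def mem_Collect_eq
    by (rule exI[of _ "Suc n"], rule exI[of _ ?f]) (use e m in simp)
qed

lemma fs_induct_raw:
  assumes "P 0" "\<And>y s. P y \<Longrightarrow> s \<in> S \<Longrightarrow> P (y + s)"
  shows "\<forall>f. (\<forall>i<(n::nat). f i \<in> S) \<longrightarrow> P (\<Sum>i<n. f i)"
proof (induction n)
  case 0 show ?case using assms(1) by simp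
next
  case (Suc n)
  show ?case
  proof (intro allI impI)
    fix f assume h: "\<forall>i<Suc n. f i \<in> S"
    hence "P (\<Sum>i<n. f i)" using Suc by simp
    moreover have "f n \<in> S" using h by simp
    ultimately have "P ((\<Sum>i<n. f i) + f n)" by (rule assms(2))
    thus "P (\<Sum>i<Suc n. f i)" by simp
  qed
qed

lemma fs_induct:
  assumes "x \<in> fin_sums S" "P 0" "\<And>y s. P y \<Longrightarrow> s \<in> S \<Longrightarrow> P (y + s)"
  shows "P x"
proof -
  obtain n f where nf: "\<forall>i<(n::nat). f i \<in> S" "x = (\<Sum>i<n. f i)" using assms(1) unfolding fin_sums_def mem_Collect_eq by blast
  thus ?thesis using fs_induct_raw[of P S, OF assms(2,3)] by blast
qed

lemma fs_add: assumes "x \<in> fin_sums S" "y \<in> fin_sums S" shows "x + y \<in> fin_sums S"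
proof -
  have st: "x + (y + s) \<in> fin_sums S" if "x + y \<in> fin_sums S" "s \<in> S" for y s
    using fs_snoc[OF that] by (simp add: add.assoc)
  have "x + 0 \<in> fin_sums S" using assms(1) by simp
  thus ?thesis using fs_induct[OF assms(2), of "\<lambda>y. x + y \<in> fin_sums S"] st by blast
qed

lemma fs_closed:
  assumes "x \<in> fin_sums S" "P 0" "\<And>y z. P y \<Longrightarrow> P z \<Longrightarrow> P (y + z)" "\<And>s. s \<in> S \<Longrightarrow> P s"
  shows "P x"
  using assms(1) by (rule fs_induct) (use assms in auto)

lemma closed_sum:
  assumes "P 0" "\<And>y z. P y \<Longrightarrow> P z \<Longrightarrow> P (y + z)" "\<And>i. i \<in> I \<Longrightarrow> P (f i)"
  shows "P (sum f I)"
proof (cases "finite I")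
  case True thus ?thesis using assms(3)
    by (induction I rule: finite_induct) (use assms(1,2) in auto)
qed (use assms in auto)

lemma fs_sum: "(\<And>i. i \<in> I \<Longrightarrow> f i \<in> fin_sums S) \<Longrightarrow> sum f I \<in> fin_sums S"
  by (rule closed_sum[where P="\<lambda>x. x \<in> fin_sums S"]) (auto intro: fs_0 fs_add)

lemma fs_sub: "x \<in> fin_sums S \<Longrightarrow> (\<And>s. s \<in> S \<Longrightarrow> s \<in> fin_sums T) \<Longrightarrow> x \<in> fin_sums T"
  by (erule fs_closed) (auto intro: fs_0 fs_add)

lemma fs_map:
  assumes "addf \<phi>" "x \<in> fin_sums S" "\<And>s. s \<in> S \<Longrightarrow> \<phi> s \<in> fin_sums T"
  shows "\<phi> x \<in> fin_sums T"
proof (rule fs_closed[where P="\<lambda>x. \<phi> x \<in> fin_sums T", OF assms(2)])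
  show "\<phi> 0 \<in> fin_sums T" using addf_0[OF assms(1)] fs_0 by simp
next
  fix y z assume "\<phi> y \<in> fin_sums T" "\<phi> z \<in> fin_sums T"
  thus "\<phi> (y + z) \<in> fin_sums T" using assms(1) fs_add unfolding addf_def by metis
qed (use assms(3) in auto)

definition gcomp :: "('g \<Rightarrow> 'm::ab_group_add set) \<Rightarrow> 'm \<Rightarrow> 'g \<Rightarrow> 'm" where
  "gcomp G m = (THE c. finite {g. c g \<noteq> 0} \<and> (\<forall>g. c g \<in> G g) \<and> m = (\<Sum>g\<in>{g. c g \<noteq> 0}. c g))"

lemma gcomp_props: assumes "graded_group G"
  shows "finite {g. gcomp G m g \<noteq> 0}" "gcomp G m g \<in> G g" "m = (\<Sum>g\<in>{g. gcomp G m g \<noteq> 0}. gcomp G m g)"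
proof -
  have "\<exists>!c. finite {g. c g \<noteq> 0} \<and> (\<forall>g. c g \<in> G g) \<and> m = (\<Sum>g\<in>{g. c g \<noteq> 0}. c g)"
    using assms unfolding graded_group_def by blast
  from theI'[OF this] show "finite {g. gcomp G m g \<noteq> 0}" "gcomp G m g \<in> G g" "m = (\<Sum>g\<in>{g. gcomp G m g \<noteq> 0}. gcomp G m g)"
    unfolding gcomp_def by auto
qed

lemma gcomp_unique: assumes "graded_group G" "finite S" "\<And>g. c g \<in> G g" "\<And>g. g \<notin> S \<Longrightarrow> c g = 0"
  "m = (\<Sum>g\<in>S. c g)"
  shows "gcomp G m = c"
proof -
  have "\<exists>!c. finite {g. c g \<noteq> 0} \<and> (\<forall>g. c g \<in> G g) \<and> m = (\<Sum>g\<in>{g. c g \<noteq> 0}. c g)"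
    using assms unfolding graded_group_def by blast
  moreover have sub: "{g. c g \<noteq> 0} \<subseteq> S" using assms(4) by blast
  moreover have "(\<Sum>g\<in>S. c g) = (\<Sum>g\<in>{g. c g \<noteq> 0}. c g)"
    by (rule sum.mono_neutral_right) (use assms(2) sub in auto)
  ultimately show ?thesis unfolding gcomp_def
    using assms(2,3,5) finite_subset by (intro the1_equality) auto
qed

lemma gcomp_expand: assumes "graded_group G" "finite S" "{g. gcomp G m g \<noteq> 0} \<subseteq> S"
  shows "m = (\<Sum>g\<in>S. gcomp G m g)"
proof -
  have "(\<Sum>g\<in>S. gcomp G m g) = (\<Sum>g\<in>{g. gcomp G m g \<noteq> 0}. gcomp G m g)"
    by (rule sum.mono_neutral_right) (use assms in auto)
  thus ?thesis using gcomp_props(3)[OF assms(1)] by simp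
qed

lemma gg_0: "graded_group G \<Longrightarrow> 0 \<in> G g" unfolding graded_group_def by blast
lemma gg_add: "graded_group G \<Longrightarrow> x \<in> G g \<Longrightarrow> y \<in> G g \<Longrightarrow> x + y \<in> G g" unfolding graded_group_def by blast

lemma gcomp_homog: assumes "graded_group G" "m \<in> G h"
  shows "gcomp G m = (\<lambda>g. if g = h then m else 0)"
  by (rule gcomp_unique[where S="{h}"]) (use assms gg_0 in auto)

lemma gcomp_add: assumes "graded_group G"
  shows "gcomp G (x + y) g = gcomp G x g + gcomp G y g"
proof -
  let ?S = "{g. gcomp G x g \<noteq> 0} \<union> {g. gcomp G y g \<noteq> 0}"
  have fin: "finite ?S" using gcomp_props(1)[OF assms] by auto
  have "x = (\<Sum>g\<in>?S. gcomp G x g)" "y = (\<Sum>g\<in>?S. gcomp G y g)"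
    by (rule gcomp_expand[OF assms fin]; auto)+
  hence "x + y = (\<Sum>g\<in>?S. gcomp G x g + gcomp G y g)" by (simp add: sum.distrib)
  hence "gcomp G (x + y) = (\<lambda>g. gcomp G x g + gcomp G y g)"
    by (intro gcomp_unique[OF assms fin]) (auto intro: gg_add[OF assms] gcomp_props(2)[OF assms])
  thus ?thesis by simp
qed

lemma gcomp_addf: "graded_group G \<Longrightarrow> addf (\<lambda>x. gcomp G x g)"
  unfolding addf_def using gcomp_add by metis

lemma gcomp_hom: assumes "graded_group GU" "graded_group GV" "addf \<pi>" "\<And>t x. x \<in> GU t \<Longrightarrow> \<pi> x \<in> GV t"
  shows "gcomp GV (\<pi> u) g = \<pi> (gcomp GU u g)"
proof -
  let ?S = "{g. gcomp GU u g \<noteq> 0}"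
  have fin: "finite ?S" using gcomp_props(1)[OF assms(1)] by auto
  have "\<pi> u = (\<Sum>g\<in>?S. \<pi> (gcomp GU u g))"
    using gcomp_props(3)[OF assms(1), of u] addf_sum[OF assms(3)] by metis
  hence "gcomp GV (\<pi> u) = (\<lambda>g. \<pi> (gcomp GU u g))"
    by (intro gcomp_unique[OF assms(2) fin]) (auto intro: assms(4) gcomp_props(2)[OF assms(1)] simp: addf_0[OF assms(3)])
  thus ?thesis by simp
qed

theorem corollary5p5:
  fixes GA :: "'g::group_add \<Rightarrow> 'a::ring set" and GB :: "'g \<Rightarrow> 'b::ring set"
    and GP :: "'g \<Rightarrow> 'p::ab_group_add set" and GQ :: "'g \<Rightarrow> 'q::ab_group_add set"
    and laP :: "'a \<Rightarrow> 'p \<Rightarrow> 'p" and raP :: "'p \<Rightarrow> 'b \<Rightarrow> 'p"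
    and lbQ :: "'b \<Rightarrow> 'q \<Rightarrow> 'q" and raQ :: "'q \<Rightarrow> 'a \<Rightarrow> 'q"
    and mu :: "'p \<Rightarrow> 'q \<Rightarrow> 'a" and nu :: "'q \<Rightarrow> 'p \<Rightarrow> 'b"
    and GU :: "'g \<Rightarrow> 'u::ab_group_add set" and sU :: "'a \<Rightarrow> 'u \<Rightarrow> 'u"
    and GV :: "'g \<Rightarrow> 'v::ab_group_add set" and sV :: "'a \<Rightarrow> 'v \<Rightarrow> 'v"
    and \<pi> :: "'u \<Rightarrow> 'v"
  assumes ctx: "graded_morita_context GA GB GP GQ laP raP lbQ raQ mu nu"
    and mu_surj: "fin_sums {mu p q | p q. True} = UNIV"
    and nu_surj: "fin_sums {nu q p | q p. True} = UNIV"
    and U: "graded_lmod GA GU sU" "unital_lmod sU"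
    and V: "graded_lmod GA GV sV"
    and quot: "graded_hom_deg GU GV sU sV 0 \<pi>" "surj \<pi>" "\<forall>u. \<pi> u = 0 \<longleftrightarrow> u \<in> torsion sU"
  shows "\<exists>\<phi>. graded_B_iso GP laP raP GU sU GV sV \<phi>"
proof -
  note C = ctx[unfolded graded_morita_context_def unital_graded_bimod_def graded_lmod_def
      graded_rmod_def lmod_def rmod_def graded_ring_def unital_lmod_def]
  have gA: "graded_group GA" using C by (elim conjE) assumption
  have gP: "graded_group GP" using C by (elim conjE) assumption
  have gQ: "graded_group GQ" using C by (elim conjE) assumption
  note UU = U(1)[unfolded graded_lmod_def lmod_def]
  note VV = V[unfolded graded_lmod_def lmod_def]
  note QQ = quot(1)[unfolded graded_hom_deg_def]
  have gU: "graded_group GU" using UU by (elim conjE) assumption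
  have gV: "graded_group GV" using VV by (elim conjE) assumption
  have laP_add2: "\<forall>a x y. laP a (x + y) = laP a x + laP a y" using C by (elim conjE) assumption
  note laP_add2 = laP_add2[rule_format]
  have laP_add1: "\<forall>a b x. laP (a + b) x = laP a x + laP b x" using C by (elim conjE) assumption
  note laP_add1 = laP_add1[rule_format]
  have laP_deg0: "\<forall>s t. \<forall>a\<in>GA s. \<forall>m\<in>GP t. laP a m \<in> GP (s + t)" using C by (elim conjE) assumption
  have laP_deg: "\<And>a y \<alpha> \<beta>. a \<in> GA \<alpha> \<Longrightarrow> y \<in> GP \<beta> \<Longrightarrow> laP a y \<in> GP (\<alpha> + \<beta>)" using laP_deg0 by blast
  have raP_add1: "\<forall>b x y. raP (x + y) b = raP x b + raP y b" using C by (elim conjE) assumption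
  note raP_add1 = raP_add1[rule_format]
  have raP_add2: "\<forall>b c x. raP x (b + c) = raP x b + raP x c" using C by (elim conjE) assumption
  note raP_add2 = raP_add2[rule_format]
  have raP_laP: "\<forall>a m b. raP (laP a m) b = laP a (raP m b)" using C by (elim conjE) assumption
  note raP_laP = raP_laP[rule_format]
  have unit_laP: "fin_sums {laP a m | a m. True} = UNIV" using C by (elim conjE) assumption
  have unit_lbQ: "fin_sums {lbQ b q | b q. True} = UNIV" using C by (elim conjE) assumption
  have mu_add1: "\<forall>p p' q. mu (p + p') q = mu p q + mu p' q" using C by (elim conjE) assumption
  note mu_add1 = mu_add1[rule_format]
  have mu_add2: "\<forall>p q q'. mu p (q + q') = mu p q + mu p q'" using C by (elim conjE) assumption
  note mu_add2 = mu_add2[rule_format]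
  have mu_raP: "\<forall>p b q. mu (raP p b) q = mu p (lbQ b q)" using C by (elim conjE) assumption
  note mu_raP = mu_raP[rule_format]
  have mu_laP: "\<forall>a p q. mu (laP a p) q = a * mu p q" using C by (elim conjE) assumption
  note mu_laP = mu_laP[rule_format]
  have mu_deg0: "\<forall>s t. \<forall>p\<in>GP s. \<forall>q\<in>GQ t. mu p q \<in> GA (s + t)" using C by (elim conjE) assumption
  have mu_deg: "\<And>p q s t. p \<in> GP s \<Longrightarrow> q \<in> GQ t \<Longrightarrow> mu p q \<in> GA (s + t)" using mu_deg0 by blast
  have nu_add2: "\<forall>q p p'. nu q (p + p') = nu q p + nu q p'" using C by (elim conjE) assumption
  note nu_add2 = nu_add2[rule_format]
  have nu_rel: "\<forall>p' q p. raP p' (nu q p) = laP (mu p' q) p" using C by (elim conjE) assumption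
  note nu_rel = nu_rel[rule_format]
  have sU_add2: "\<forall>a x y. sU a (x + y) = sU a x + sU a y" using UU by (elim conjE) assumption
  note sU_add2 = sU_add2[rule_format]
  have sU_mult: "\<forall>a b x. sU (a * b) x = sU a (sU b x)" using UU by (elim conjE) assumption
  note sU_mult = sU_mult[rule_format]
  have sU_add1: "\<forall>a b x. sU (a + b) x = sU a x + sU b x" using UU by (elim conjE) assumption
  note sU_add1 = sU_add1[rule_format]
  have sU_deg0: "\<forall>s t. \<forall>a\<in>GA s. \<forall>m\<in>GU t. sU a m \<in> GU (s + t)" using UU by (elim conjE) assumption
  have sU_deg: "\<And>a m s t. a \<in> GA s \<Longrightarrow> m \<in> GU t \<Longrightarrow> sU a m \<in> GU (s + t)" using sU_deg0 by blast
  have sV_add2: "\<forall>a x y. sV a (x + y) = sV a x + sV a y" using VV by (elim conjE) assumption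
  note sV_add2 = sV_add2[rule_format]
  have pi_add: "\<forall>x y. \<pi> (x + y) = \<pi> x + \<pi> y" using QQ by (elim conjE) assumption
  note pi_add = pi_add[rule_format]
  have pi_lin: "\<forall>a x. \<pi> (sU a x) = sV a (\<pi> x)" using QQ by (elim conjE) assumption
  note pi_lin = pi_lin[rule_format]
  have pi_deg0: "\<forall>t. \<forall>x\<in>GU t. \<pi> x \<in> GV (t + 0)" using QQ by (elim conjE) assumption
  have pi_deg: "\<And>x t. x \<in> GU t \<Longrightarrow> \<pi> x \<in> GV t" using pi_deg0 by simp
  have tors: "\<And>u a. \<pi> u = 0 \<Longrightarrow> sU a u = 0" using quot(3) unfolding torsion_def by simp
  have pi_addf: "addf \<pi>" unfolding addf_def using pi_add by blast
  have sU_addf: "addf (sU a)" for a unfolding addf_def using sU_add2 by blast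
  have sV_addf: "addf (sV a)" for a unfolding addf_def using sV_add2 by blast
  have sU0: "sU a 0 = 0" for a using addf_0[OF sU_addf] .
  have sV0: "sV a 0 = 0" for a using addf_0[OF sV_addf] .

  define lin where "lin = (\<lambda>f::'p \<Rightarrow> 'u. (\<forall>x y. f (x + y) = f x + f y) \<and> (\<forall>a x. f (laP a x) = sU a (f x)))"
  define \<phi> where "\<phi> = (\<lambda>f::'p \<Rightarrow> 'u. \<pi> \<circ> f)"
  let ?D1 = "B_dot raP (HOM GP GU laP sU)"
  let ?D2 = "B_dot raP (HOM GP GV laP sV)"

  have phi_addf: "addf \<phi>" unfolding addf_def \<phi>_def by (auto simp: fun_eq_iff pi_add)
  have hb_addf: "addf (hom_bact raP b :: ('p \<Rightarrow> 'v) \<Rightarrow> _)" for b :: 'b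
    unfolding addf_def hom_bact_def by (auto simp: fun_eq_iff)
  have hb_addf_b: "addf (\<lambda>b. hom_bact raP b k)" if "\<And>x y. k (x + y) = k x + k y" for k :: "'p \<Rightarrow> 'v"
    unfolding addf_def hom_bact_def by (auto simp: fun_eq_iff raP_add2 that)
  have phi_hb: "\<phi> (hom_bact raP b f) = hom_bact raP b (\<phi> f)" for b f
    unfolding \<phi>_def hom_bact_def by (simp add: fun_eq_iff)

  have HOM_lin: "lin h" if "h \<in> HOM GP GU laP sU" for h
    using that unfolding HOM_def
  proof (rule fs_closed[where P=lin])
    show "lin 0" unfolding lin_def by (simp add: sU0)
    show "lin (y + z)" if "lin y" "lin z" for y z
      using that unfolding lin_def by (simp add: sU_add2 algebra_simps)
    show "lin s" if "s \<in> (\<Union>s. HOMs GP GU laP sU s)" for s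
      using that unfolding lin_def HOMs_def graded_hom_deg_def by blast
  qed
  have D1_lin: "lin f" if "f \<in> ?D1" for f
    using that unfolding B_dot_def
  proof (rule fs_closed[where P=lin])
    show "lin 0" unfolding lin_def by (simp add: sU0)
    show "lin (y + z)" if "lin y" "lin z" for y z
      using that unfolding lin_def by (simp add: sU_add2 algebra_simps)
    show "lin s" if hs: "s \<in> {hom_bact raP b h |b h. h \<in> HOM GP GU laP sU}" for s
    proof -
      obtain b h where s: "s = hom_bact raP b h" and h: "h \<in> HOM GP GU laP sU" using hs by blast
      have "lin h" using HOM_lin[OF h] .
      thus ?thesis unfolding s lin_def hom_bact_def by (simp add: raP_add1 raP_laP)
    qed
  qed

  have HOMs_phi: "\<phi> k \<in> HOMs GP GV laP sV s" if "k \<in> HOMs GP GU laP sU s" for k s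
    using that unfolding HOMs_def graded_hom_deg_def \<phi>_def by (auto simp: pi_add pi_lin pi_deg)

  have inj: "f = g" if f: "f \<in> ?D1" and g: "g \<in> ?D1" and e: "\<phi> f = \<phi> g" for f g
  proof
    fix x :: 'p
    have lf: "lin f" and lg: "lin g" using D1_lin f g by blast+
    have x: "x \<in> fin_sums {laP a m | a m. True}" using unit_laP by simp
    show "f x = g x" using x
    proof (rule fs_closed[where P="\<lambda>x. f x = g x"])
      show "f 0 = g 0" using lf lg unfolding lin_def by (metis add_cancel_right_right)
      show "f (y + z) = g (y + z)" if "f y = g y" "f z = g z" for y z
        using that lf lg unfolding lin_def by simp
      show "f s = g s" if hs: "s \<in> {laP a m | a m. True}" for s
      proof -
        obtain a m where s: "s = laP a m" using hs by blast
        have "\<pi> (f m) = \<pi> (g m)" using e unfolding \<phi>_def by (metis comp_apply)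
        hence "\<pi> (f m - g m) = 0" using addf_diff[OF pi_addf] by simp
        hence "sU a (f m - g m) = 0" by (rule tors)
        hence "sU a (f m) = sU a (g m)" using addf_diff[OF sU_addf] by simp
        thus ?thesis using s lf lg unfolding lin_def by simp
      qed
    qed
  qed

  have image: "\<phi> f \<in> ?D2" if "f \<in> ?D1" for f
    using phi_addf that[unfolded B_dot_def] unfolding B_dot_def
  proof (rule fs_map)
    fix s assume "s \<in> {hom_bact raP b h |b h. h \<in> HOM GP GU laP sU}"
    then obtain b h where s: "s = hom_bact raP b h" and h: "h \<in> HOM GP GU laP sU" by blast
    have "\<phi> h \<in> HOM GP GV laP sV"
      using phi_addf h[unfolded HOM_def] unfolding HOM_def
    proof (rule fs_map)
      fix k assume "k \<in> (\<Union>s. HOMs GP GU laP sU s)"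
      thus "\<phi> k \<in> fin_sums (\<Union>s. HOMs GP GV laP sV s)" using HOMs_phi by (blast intro: fs_base)
    qed
    thus "\<phi> s \<in> fin_sums {hom_bact raP b h |b h. h \<in> HOM GP GV laP sV}"
      unfolding s phi_hb by (blast intro: fs_base)
  qed

  define L where "L = \<phi> ` ?D1"
  have L0: "0 \<in> L"
  proof -
    have "(0::'p\<Rightarrow>'u) \<in> ?D1" unfolding B_dot_def by (rule fs_0)
    moreover have "\<phi> 0 = 0" using addf_0[OF phi_addf] .
    ultimately show ?thesis unfolding L_def by (metis image_eqI)
  qed
  have Ladd: "y + z \<in> L" if hyz: "y \<in> L" "z \<in> L" for y z
  proof -
    obtain f g where "f \<in> ?D1" "g \<in> ?D1" "y = \<phi> f" "z = \<phi> g" using hyz unfolding L_def by blast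
    moreover have "f + g \<in> ?D1" using calculation unfolding B_dot_def by (blast intro: fs_add)
    ultimately show ?thesis using phi_addf unfolding L_def addf_def by (metis image_eqI)
  qed
  have Lsum: "sum F I \<in> L" if "\<And>i. i \<in> I \<Longrightarrow> F i \<in> L" for F and I :: "'i set"
    by (rule closed_sum[where P="\<lambda>x. x \<in> L"]) (use L0 Ladd that in auto)

  have core: "hom_bact raP (nu q p) k \<in> L" if p: "p \<in> GP \<beta>" and k: "k \<in> HOMs GP GV laP sV s" for q p k \<beta> s
  proof -
    have kp: "k p \<in> GV (\<beta> + s)" using k p unfolding HOMs_def graded_hom_deg_def by blast
    have klin: "\<And>a x. k (laP a x) = sV a (k x)" using k unfolding HOMs_def graded_hom_deg_def by blast
    obtain u0 where u0: "\<pi> u0 = k p" using quot(2) by (metis surjD)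
    define u where "u = gcomp GU u0 (\<beta> + s)"
    have uG: "u \<in> GU (\<beta> + s)" unfolding u_def by (rule gcomp_props(2)[OF gU])
    have "\<pi> u = gcomp GV (\<pi> u0) (\<beta> + s)" unfolding u_def
      using gcomp_hom[OF gU gV pi_addf pi_deg] by simp
    also have "\<dots> = k p" unfolding u0 gcomp_homog[OF gV kp] by simp
    finally have piu: "\<pi> u = k p" .
    define G where "G = (\<lambda>q'. (\<lambda>x. sU (mu x q') u))"
    have G_addf: "addf G" unfolding addf_def G_def by (simp add: fun_eq_iff mu_add2 sU_add1)
    have G_homs: "G q' \<in> HOMs GP GU laP sU (\<sigma> + (\<beta> + s))" if "q' \<in> GQ \<sigma>" for q' \<sigma>
      unfolding HOMs_def graded_hom_deg_def G_def
    proof (intro CollectI conjI allI ballI)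
      show "sU (mu (x + y) q') u = sU (mu x q') u + sU (mu y q') u" for x y by (simp add: mu_add1 sU_add1)
      show "sU (mu (laP a x) q') u = sU a (sU (mu x q') u)" for a x by (simp add: mu_laP sU_mult)
      show "sU (mu x q') u \<in> GU (t + (\<sigma> + (\<beta> + s)))" if "x \<in> GP t" for t x
        using sU_deg[OF mu_deg[OF that \<open>q' \<in> GQ \<sigma>\<close>] uG] by (simp add: add.assoc)
    qed
    have G_HOM: "G q' \<in> HOM GP GU laP sU" for q'
    proof -
      let ?S = "{g. gcomp GQ q' g \<noteq> 0}"
      have "q' = (\<Sum>g\<in>?S. gcomp GQ q' g)" by (rule gcomp_props(3)[OF gQ])
      hence "G q' = (\<Sum>g\<in>?S. G (gcomp GQ q' g))" using addf_sum[OF G_addf] by metis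
      moreover have "G (gcomp GQ q' g) \<in> HOM GP GU laP sU" for g
        unfolding HOM_def using G_homs[OF gcomp_props(2)[OF gQ]] by (blast intro: fs_base)
      ultimately show ?thesis unfolding HOM_def by (metis fs_sum)
    qed
    have G_D1: "G q \<in> ?D1"
    proof -
      have "q \<in> fin_sums {lbQ b q | b q. True}" using unit_lbQ by simp
      thus ?thesis unfolding B_dot_def
      proof (rule fs_map[OF G_addf])
        fix t assume "t \<in> {lbQ b q | b q. True}"
        then obtain b q' where t: "t = lbQ b q'" by blast
        have "G t = hom_bact raP b (G q')" unfolding t G_def hom_bact_def by (simp add: fun_eq_iff mu_raP)
        thus "G t \<in> fin_sums {hom_bact raP b h |b h. h \<in> HOM GP GU laP sU}"
          using G_HOM by (blast intro: fs_base)
      qed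
    qed
    have "\<phi> (G q) = hom_bact raP (nu q p) k"
      unfolding \<phi>_def G_def hom_bact_def by (simp add: fun_eq_iff pi_lin piu nu_rel klin)
    thus ?thesis using G_D1 unfolding L_def by (metis image_eqI)
  qed
  have core2: "hom_bact raP (nu q p) k \<in> L" if k: "k \<in> HOMs GP GV laP sV s" for q p k s
  proof -
    have kadd: "\<And>x y. k (x + y) = k x + k y" using k unfolding HOMs_def graded_hom_deg_def by blast
    let ?S = "{g. gcomp GP p g \<noteq> 0}"
    have nuaddf: "addf (nu q)" unfolding addf_def using nu_add2 by blast
    have "p = (\<Sum>g\<in>?S. gcomp GP p g)" by (rule gcomp_props(3)[OF gP])
    hence "nu q p = (\<Sum>g\<in>?S. nu q (gcomp GP p g))" using addf_sum[OF nuaddf] by metis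
    hence "hom_bact raP (nu q p) k = (\<Sum>g\<in>?S. hom_bact raP (nu q (gcomp GP p g)) k)"
      using addf_sum[OF hb_addf_b[OF kadd]] by metis
    moreover have "hom_bact raP (nu q (gcomp GP p g)) k \<in> L" for g
      by (rule core[OF gcomp_props(2)[OF gP] k])
    ultimately show ?thesis using Lsum by metis
  qed
  have core3: "hom_bact raP b k \<in> L" if k: "k \<in> HOMs GP GV laP sV s" for b k s
  proof -
    have kadd: "\<And>x y. k (x + y) = k x + k y" using k unfolding HOMs_def graded_hom_deg_def by blast
    note ha = hb_addf_b[OF kadd]
    have "b \<in> fin_sums {nu q p | q p. True}" using nu_surj by simp
    thus ?thesis
    proof (rule fs_closed[where P="\<lambda>b. hom_bact raP b k \<in> L"])
      show "hom_bact raP 0 k \<in> L" using addf_0[OF ha] L0 by simp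
      show "hom_bact raP (y + z) k \<in> L" if "hom_bact raP y k \<in> L" "hom_bact raP z k \<in> L" for y z
        using ha that Ladd unfolding addf_def by metis
      show "hom_bact raP t k \<in> L" if "t \<in> {nu q p | q p. True}" for t
        using that core2[OF k] by blast
    qed
  qed
  have core4: "hom_bact raP b h \<in> L" if h: "h \<in> HOM GP GV laP sV" for b h
    using h unfolding HOM_def
  proof (rule fs_closed[where P="\<lambda>h. hom_bact raP b h \<in> L"])
    show "hom_bact raP b 0 \<in> L" using addf_0[OF hb_addf] L0 by simp
    show "hom_bact raP b (y + z) \<in> L" if "hom_bact raP b y \<in> L" "hom_bact raP b z \<in> L" for y z
      using hb_addf that Ladd unfolding addf_def by metis
    show "hom_bact raP b t \<in> L" if "t \<in> (\<Union>s. HOMs GP GV laP sV s)" for t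
      using that core3 by blast
  qed
  have surj: "h \<in> L" if "h \<in> ?D2" for h
    using that unfolding B_dot_def
  proof (rule fs_closed[where P="\<lambda>h. h \<in> L"])
    show "(0::'p \<Rightarrow> 'v) \<in> L" by (rule L0)
    show "y + z \<in> L" if "y \<in> L" "z \<in> L" for y z using Ladd that .
    show "t \<in> L" if "t \<in> {hom_bact raP b h |b h. h \<in> HOM GP GV laP sV}" for t
      using that core4 by blast
  qed

  have decomp: "x \<in> fin_sums {laP a y | a y. \<exists>\<alpha> \<beta>. a \<in> GA \<alpha> \<and> y \<in> GP \<beta> \<and> \<alpha> + \<beta> = t}"
    if x: "x \<in> GP t" for x t
  proof -
    let ?St = "{laP a y | a y. \<exists>\<alpha> \<beta>. a \<in> GA \<alpha> \<and> y \<in> GP \<beta> \<and> \<alpha> + \<beta> = t}"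
    have xe: "x = gcomp GP x t" using gcomp_homog[OF gP x] by simp
    have "x \<in> fin_sums {laP a m | a m. True}" using unit_laP by simp
    hence "gcomp GP x t \<in> fin_sums ?St"
    proof (rule fs_map[OF gcomp_addf[OF gP]])
      fix z assume "z \<in> {laP a m | a m. True}"
      then obtain a m where z: "z = laP a m" by blast
      let ?SA = "{g. gcomp GA a g \<noteq> 0}" and ?SM = "{g. gcomp GP m g \<noteq> 0}"
      have ad1: "addf (\<lambda>a. laP a m')" for m' unfolding addf_def using laP_add1 by blast
      have ad2: "addf (laP a')" for a' unfolding addf_def using laP_add2 by blast
      have s1: "laP (\<Sum>\<alpha>\<in>?SA. gcomp GA a \<alpha>) m = (\<Sum>\<alpha>\<in>?SA. laP (gcomp GA a \<alpha>) m)"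
        by (rule addf_sum[OF ad1])
      have s2: "laP a' (\<Sum>\<beta>\<in>?SM. gcomp GP m \<beta>) = (\<Sum>\<beta>\<in>?SM. laP a' (gcomp GP m \<beta>))" for a'
        by (rule addf_sum[OF ad2])
      have s1': "laP a m = (\<Sum>\<alpha>\<in>?SA. laP (gcomp GA a \<alpha>) m)"
        using s1 unfolding gcomp_props(3)[OF gA, of a, symmetric] .
      have s2': "laP a' m = (\<Sum>\<beta>\<in>?SM. laP a' (gcomp GP m \<beta>))" for a'
        using s2[of a'] unfolding gcomp_props(3)[OF gP, of m, symmetric] .
      have gs: "gcomp GP (sum F I) t = (\<Sum>i\<in>I. gcomp GP (F i) t)" for F :: "'g \<Rightarrow> 'p" and I
        by (rule addf_sum[OF gcomp_addf[OF gP]])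
      have e: "gcomp GP z t = (\<Sum>\<alpha>\<in>?SA. \<Sum>\<beta>\<in>?SM. gcomp GP (laP (gcomp GA a \<alpha>) (gcomp GP m \<beta>)) t)"
      proof -
        have "gcomp GP z t = gcomp GP (\<Sum>\<alpha>\<in>?SA. laP (gcomp GA a \<alpha>) m) t" by (simp only: z s1')
        also have "\<dots> = (\<Sum>\<alpha>\<in>?SA. gcomp GP (laP (gcomp GA a \<alpha>) m) t)" by (rule gs)
        also have "\<dots> = (\<Sum>\<alpha>\<in>?SA. \<Sum>\<beta>\<in>?SM. gcomp GP (laP (gcomp GA a \<alpha>) (gcomp GP m \<beta>)) t)"
          by (simp only: s2' gs)
        finally show ?thesis .
      qed
      have "gcomp GP (laP (gcomp GA a \<alpha>) (gcomp GP m \<beta>)) t \<in> fin_sums ?St" for \<alpha> \<beta>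
      proof -
        have mem: "laP (gcomp GA a \<alpha>) (gcomp GP m \<beta>) \<in> GP (\<alpha> + \<beta>)"
          by (rule laP_deg[OF gcomp_props(2)[OF gA] gcomp_props(2)[OF gP]])
        show ?thesis
        proof (cases "\<alpha> + \<beta> = t")
          case True
          have "laP (gcomp GA a \<alpha>) (gcomp GP m \<beta>) \<in> ?St"
            by (rule CollectI, rule exI[of _ "gcomp GA a \<alpha>"], rule exI[of _ "gcomp GP m \<beta>"])
              (use True gcomp_props(2)[OF gA] gcomp_props(2)[OF gP] in blast)
          thus ?thesis unfolding gcomp_homog[OF gP mem] using True by (simp add: fs_base)
        next
          case False
          thus ?thesis unfolding gcomp_homog[OF gP mem] using fs_0 by simp
        qed
      qed
      thus "gcomp GP z t \<in> fin_sums ?St" unfolding e by (intro fs_sum)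
    qed
    thus ?thesis using xe by simp
  qed

  have deg: "f \<in> HOMs GP GU laP sU s \<longleftrightarrow> \<phi> f \<in> HOMs GP GV laP sV s" if f: "f \<in> ?D1" for f s
  proof
    assume "f \<in> HOMs GP GU laP sU s" thus "\<phi> f \<in> HOMs GP GV laP sV s" by (rule HOMs_phi)
  next
    assume pf: "\<phi> f \<in> HOMs GP GV laP sV s"
    have lf: "lin f" using D1_lin f .
    have pfd: "\<pi> (f y) \<in> GV (\<beta> + s)" if "y \<in> GP \<beta>" for y \<beta>
      using pf that unfolding HOMs_def graded_hom_deg_def \<phi>_def by auto
    have f0: "f 0 = 0" using lf unfolding lin_def by (metis add_cancel_right_right)
    have "f x \<in> GU (t + s)" if x: "x \<in> GP t" for x t
      using decomp[OF x]
    proof (rule fs_closed[where P="\<lambda>x. f x \<in> GU (t + s)"])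
      show "f 0 \<in> GU (t + s)" using f0 gg_0[OF gU] by simp
      show "f (y + z) \<in> GU (t + s)" if "f y \<in> GU (t + s)" "f z \<in> GU (t + s)" for y z
        using lf that gg_add[OF gU] unfolding lin_def by simp
      show "f w \<in> GU (t + s)" if hw: "w \<in> {laP a y | a y. \<exists>\<alpha> \<beta>. a \<in> GA \<alpha> \<and> y \<in> GP \<beta> \<and> \<alpha> + \<beta> = t}" for w
      proof -
        obtain a y \<alpha> \<beta> where w: "w = laP a y" and a: "a \<in> GA \<alpha>" and y: "y \<in> GP \<beta>" and t: "\<alpha> + \<beta> = t"
          using hw by blast
        define c where "c = gcomp GU (f y) (\<beta> + s)"
        have "\<pi> c = gcomp GV (\<pi> (f y)) (\<beta> + s)" unfolding c_def
          using gcomp_hom[OF gU gV pi_addf pi_deg] by simp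
        also have "\<dots> = \<pi> (f y)" unfolding gcomp_homog[OF gV pfd[OF y]] by simp
        finally have "\<pi> (f y - c) = 0" using addf_diff[OF pi_addf] by simp
        hence "sU a (f y - c) = 0" by (rule tors)
        hence "sU a (f y) = sU a c" using addf_diff[OF sU_addf] by simp
        moreover have "sU a c \<in> GU (\<alpha> + (\<beta> + s))" unfolding c_def
          by (rule sU_deg[OF a gcomp_props(2)[OF gU]])
        ultimately show ?thesis using lf w unfolding lin_def t[symmetric] add.assoc by simp
      qed
    qed
    thus "f \<in> HOMs GP GU laP sU s" using lf unfolding lin_def HOMs_def graded_hom_deg_def by blast
  qed

  show ?thesis
  proof (rule exI[of _ \<phi>])
    show "graded_B_iso GP laP raP GU sU GV sV \<phi>"
      unfolding graded_B_iso_def Let_def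
    proof (intro conjI ballI allI)
      show "bij_betw \<phi> ?D1 ?D2" unfolding bij_betw_def
      proof
        show "inj_on \<phi> ?D1" unfolding inj_on_def using inj by blast
        show "\<phi> ` ?D1 = ?D2" using image surj unfolding L_def by blast
      qed
      show "\<phi> (f + g) = \<phi> f + \<phi> g" for f g using phi_addf unfolding addf_def by blast
      show "\<phi> (hom_bact raP b f) = hom_bact raP b (\<phi> f)" for b f by (rule phi_hb)
      show "(f \<in> HOMs GP GU laP sU s) = (\<phi> f \<in> HOMs GP GV laP sV s)" if "f \<in> ?D1" for s f
        using deg[OF that] .
    qed
  qed
qed
end
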